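(* Let $(\Omega,\mathcal R,\mathcal K)$ be a bidirectional kinetic system satisfying the detailed balance property, and let $E$ be an energy of it. Let $U\subset\Omega$ be nonempty, $V=\Omega\setminus U$, $n_U\in(0,\infty)^{|U|}$, and consider the reduced system $(V,\mathcal R_V,\mathcal K[n_U])$. Assume that no $R\in\mathcal R$ has $\pi_VR=0$ and that every $R\in\mathcal R_V$ is a $1$-$1$ reaction. Let $n$ be a positive solution of the system with fluxes $$\frac{dn}{dt}=\sum_{R\in\mathcal R_s}RJ_R(n)+J^E(t),\qquad \pi_Un(0)=n_U.$$ Then $$\partial_tF(n)=-\mathcal D_R(n)+J^{ext}(n),$$ where $F(n)=\sum_{j\in\Omega}n_j\big(\log(n_je^{E(j)})-1\big)$, $$\mathcal D_R(n)=\sum_{R\in\mathcal R_s}K_{\pi_VR}[n_U]\prod_{i\in I(R)\cap V}n_i^{-R(i)}\Big(\frac{K_{-\pi_VR}[n_U]}{K_{\pi_VR}[n_U]}\prod_{i\in V}n_i^{R(i)}-1\Big)\log\Big(\frac{K_{-\pi_VR}[n_U]}{K_{\pi_VR}[n_U]}\prod_{j\in V}n_j^{R(j)}\Big),$$ and $J^{ext}(n)=\sum_{j\in U}J^E_j(t)\log(n_je^{E(j)})$.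
   Context: A chemical network is $(\Omega,\mathcal R)$ with $\Omega=\{1,\dots,N\}$ and $\mathcal R$ a finite set of nonzero vectors of $\mathbb Z^N$. $I(R)=\{i:R(i)<0\}$, $F(R)=\{i:R(i)>0\}$. Bidirectional: $R\in\mathcal R\Rightarrow-R\in\mathcal R$. $\mathcal R_s$ contains exactly one of each pair $\{R,-R\}$ (the one with $\min I(R)<\min F(R)$); the matrix of reactions $\mathbf R$ has the elements $R_1,\dots$ of $\mathcal R_s$ as columns. Kinetic system: rates $\mathcal K:\mathcal R\to(0,\infty)$, $K_R=\mathcal K(R)$. Fluxes: $J_R(n)=K_R\prod_{j\in I(R)}n_j^{-R(j)}-K_{-R}\prod_{j\in F(R)}n_j^{R(j)}$. Detailed balance: there is $\bar N\in(0,\infty)^N$ with $J_R(\bar N)=0$ for all $R\in\mathcal R_s$. An energy is any $E\in\mathbb R^N$ with $\mathbf R^TE=w$, $w(i)=\log(K_{-R_i}/K_{R_i})$. External fluxes: $J^E_j(t)=-\sum_{R\in\mathcal R_s}R(j)J_R(n(t))$ (scalar) for $j\in U$, and $J^E(t)=\sum_{j\in U}J^E_j(t)e_j$. Reduction: $\pi_Av=(v(i))_{i\in A}$; $\mathcal R_V=\{\pi_V\bar R:\bar R\in\mathcal R,\pi_V\bar R\ne0\}$; $R\in\mathcal R_V$ is $1$-$1$ if exactly one $\bar R\in\mathcal R$ has $\pi_V\bar R=R$; reduced rates $K_R[n_U]=\sum_{\bar R\in\mathcal R:\pi_V\bar R=R}K_{\bar R}\prod_{s\in U\cap I(\bar R)}n_s^{-\bar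 R(s)}$. *)

theory Defs
  imports Complex_Main
begin

text \<open>A reaction (a vector of Z^N)
  is a function nat => int that vanishes outside Omega. A concentration vector is a
  function nat => real (only its values on Omega matter).\<close>

type_synonym reaction = "nat \<Rightarrow> int"
type_synonym conc = "nat \<Rightarrow> real"

definition Omega :: "nat \<Rightarrow> nat set" where
  "Omega N = {1..N}"

definition neg :: "reaction \<Rightarrow> reaction" where
  "neg R = (\<lambda>i. - R i)"

definition Ireac :: "reaction \<Rightarrow> nat set" where
  "Ireac R = {i. R i < 0}"

definition Freac :: "reaction \<Rightarrow> nat set" where
  "Freac R = {i. R i > 0}"

definition chemical_network :: "nat \<Rightarrow> reaction set \<Rightarrow> bool" where
  "chemical_network N RR \<longleftrightarrow> finite RR \<and>
     (\<forall>R\<in>RR. R \<noteq> (\<lambda>_. 0) \<and> (\<forall>i. i \<notin> Omega N \<longrightarrow> R i = 0))"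

definition bidirectional :: "reaction set \<Rightarrow> bool" where
  "bidirectional RR \<longleftrightarrow> (\<forall>R\<in>RR. neg R \<in> RR)"

text \<open>Selection of R_s: R is selected iff min I(R) < min F(R), with the convention
  min {} = infinity.\<close>
definition selected :: "reaction \<Rightarrow> bool" where
  "selected R \<longleftrightarrow> Ireac R \<noteq> {} \<and> (Freac R = {} \<or> Min (Ireac R) < Min (Freac R))"

definition Rs :: "reaction set \<Rightarrow> reaction set" where
  "Rs RR = {R \<in> RR. selected R}"

definition kinetic_system :: "nat \<Rightarrow> reaction set \<Rightarrow> (reaction \<Rightarrow> real) \<Rightarrow> bool" where
  "kinetic_system N RR K \<longleftrightarrow> chemical_network N RR \<and> (\<forall>R\<in>RR. K R > 0)"

definition flux :: "(reaction \<Rightarrow> real) \<Rightarrow> reaction \<Rightarrow> conc \<Rightarrow> real" where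
  "flux K R n =
     K R * (\<Prod>j\<in>Ireac R. n j powr (of_int (- R j)))
     - K (neg R) * (\<Prod>j\<in>Freac R. n j powr (of_int (R j)))"

definition detailed_balance :: "nat \<Rightarrow> reaction set \<Rightarrow> (reaction \<Rightarrow> real) \<Rightarrow> bool" where
  "detailed_balance N RR K \<longleftrightarrow>
     (\<exists>Nbar :: conc. (\<forall>i\<in>Omega N. Nbar i > 0) \<and> (\<forall>R\<in>Rs RR. flux K R Nbar = 0))"

text \<open>E is an energy iff R^T E = w, i.e. for every column R_i of the matrix of reactions
  (the elements of R_s), sum_j R_i(j) E(j) = log (K(-R_i)/K(R_i)).\<close>
definition is_energy :: "nat \<Rightarrow> reaction set \<Rightarrow> (reaction \<Rightarrow> real) \<Rightarrow> (nat \<Rightarrow> real) \<Rightarrow> bool" where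
  "is_energy N RR K E \<longleftrightarrow>
     (\<forall>R\<in>Rs RR. (\<Sum>j\<in>Omega N. of_int (R j) * E j) = ln (K (neg R) / K R))"

text \<open>Projection pi_V, realised as restriction to V (entries outside V set to 0).\<close>
definition proj :: "nat set \<Rightarrow> reaction \<Rightarrow> reaction" where
  "proj A R = (\<lambda>i. if i \<in> A then R i else 0)"

definition reduced_reactions :: "nat set \<Rightarrow> reaction set \<Rightarrow> reaction set" where
  "reduced_reactions V RR = {proj V Rb | Rb. Rb \<in> RR \<and> proj V Rb \<noteq> (\<lambda>_. 0)}"

definition one_one :: "nat set \<Rightarrow> reaction set \<Rightarrow> reaction \<Rightarrow> bool" where
  "one_one V RR R \<longleftrightarrow> (\<exists>!Rb. Rb \<in> RR \<and> proj V Rb = R)"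

definition reduced_rate ::
  "nat set \<Rightarrow> nat set \<Rightarrow> reaction set \<Rightarrow> (reaction \<Rightarrow> real) \<Rightarrow> conc \<Rightarrow> reaction \<Rightarrow> real" where
  "reduced_rate U V RR K nU R =
     (\<Sum>Rb\<in>{Rb \<in> RR. proj V Rb = R}.
        K Rb * (\<Prod>s\<in>U \<inter> Ireac Rb. nU s powr (of_int (- Rb s))))"

definition ext_flux :: "reaction set \<Rightarrow> (reaction \<Rightarrow> real) \<Rightarrow> nat set \<Rightarrow> conc \<Rightarrow> nat \<Rightarrow> real" where
  "ext_flux RR K U n j =
     (if j \<in> U then - (\<Sum>R\<in>Rs RR. of_int (R j) * flux K R n) else 0)"

definition free_energy :: "nat \<Rightarrow> (nat \<Rightarrow> real) \<Rightarrow> conc \<Rightarrow> real" where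
  "free_energy N E n = (\<Sum>j\<in>Omega N. n j * (ln (n j * exp (E j)) - 1))"

definition dissipation ::
  "nat set \<Rightarrow> nat set \<Rightarrow> reaction set \<Rightarrow> (reaction \<Rightarrow> real) \<Rightarrow> conc \<Rightarrow> conc \<Rightarrow> real" where
  "dissipation U V RR K nU n =
     (\<Sum>R\<in>Rs RR.
        let KR = reduced_rate U V RR K nU;
            r = KR (neg (proj V R)) / KR (proj V R)
        in KR (proj V R) * (\<Prod>i\<in>Ireac R \<inter> V. n i powr (of_int (- R i)))
           * (r * (\<Prod>i\<in>V. n i powr (of_int (R i))) - 1)
           * ln (r * (\<Prod>j\<in>V. n j powr (of_int (R j)))))"

definition ext_term ::
  "reaction set \<Rightarrow> (reaction \<Rightarrow> real) \<Rightarrow> nat set \<Rightarrow> (nat \<Rightarrow> real) \<Rightarrow> conc \<Rightarrow> real" where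
  "ext_term RR K U E n = (\<Sum>j\<in>U. ext_flux RR K U n j * ln (n j * exp (E j)))"

end

theory Submission
  imports Defs "HOL-Analysis.Analysis"
begin

lemma prod_powr_exp:
  fixes x a :: "'b \<Rightarrow> real"
  assumes "finite A" "\<forall>i\<in>A. x i > 0"
  shows "(\<Prod>i\<in>A. x i powr a i) = exp (\<Sum>i\<in>A. a i * ln (x i))"
proof -
  have "(\<Prod>i\<in>A. x i powr a i) = (\<Prod>i\<in>A. exp (a i * ln (x i)))"
  proof (intro prod.cong refl)
    fix i assume "i \<in> A"
    then have "x i > 0" using assms by auto
    then show "x i powr a i = exp (a i * ln (x i))" by (simp add: powr_def)
  qed
  then show ?thesis using assms by (simp add: exp_sum)
qed

lemma split_IF:
  fixes g :: "nat \<Rightarrow> real"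
  assumes "finite X" "\<forall>i. R i = 0 \<longrightarrow> g i = 0"
  shows "sum g X = sum g (X \<inter> Ireac R) + sum g (X \<inter> Freac R)"
proof -
  have "sum g X = sum g (X \<inter> Ireac R \<union> X \<inter> Freac R)"
    by (rule sum.mono_neutral_right) (use assms in \<open>auto simp: Ireac_def Freac_def linorder_neq_iff\<close>)
  also have "\<dots> = sum g (X \<inter> Ireac R) + sum g (X \<inter> Freac R)"
    by (rule sum.union_disjoint) (use assms in \<open>auto simp: Ireac_def Freac_def\<close>)
  finally show ?thesis .
qed

lemma per_R:
  fixes R :: reaction and m nU :: conc and K :: "reaction \<Rightarrow> real"
  assumes fin: "finite Om" and U: "U \<subseteq> Om" and V: "V = Om - U"
    and out: "\<forall>i. i \<notin> Om \<longrightarrow> R i = 0" and mpos: "\<forall>i\<in>Om. m i > 0"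
    and nU: "\<forall>i\<in>U. nU i = m i" and K1: "K R > 0" and K2: "K (neg R) > 0"
    and KR1: "KR1 = K R * (\<Prod>s\<in>U \<inter> Ireac R. nU s powr of_int (- R s))"
    and KR2: "KR2 = K (neg R) * (\<Prod>s\<in>U \<inter> Freac R. nU s powr of_int (R s))"
  shows "KR1 * (\<Prod>i\<in>Ireac R \<inter> V. m i powr of_int (- R i))
          * (KR2 / KR1 * (\<Prod>i\<in>V. m i powr of_int (R i)) - 1)
          * ln (KR2 / KR1 * (\<Prod>j\<in>V. m j powr of_int (R j)))
        = - flux K R m * (ln (K (neg R) / K R) + (\<Sum>j\<in>Om. of_int (R j) * ln (m j)))"
proof -
  define g where "g i = real_of_int (R i) * ln (m i)" for i
  have g0: "\<forall>i. R i = 0 \<longrightarrow> g i = 0" by (simp add: g_def)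
  have IO: "Ireac R \<subseteq> Om" using out by (auto simp: Ireac_def)
  have FO: "Freac R \<subseteq> Om" using out by (auto simp: Freac_def)
  have finV: "finite V" "finite U" using fin U V by (auto intro: finite_subset)
  have finI: "finite (Ireac R)" "finite (Freac R)" using IO FO fin by (auto intro: finite_subset)
  have p1: "(\<Prod>s\<in>U \<inter> Ireac R. nU s powr of_int (- R s)) = exp (- sum g (U \<inter> Ireac R))"
  proof -
    have "(\<Prod>s\<in>U \<inter> Ireac R. nU s powr of_int (- R s)) = (\<Prod>s\<in>U \<inter> Ireac R. m s powr of_int (- R s))"
      using nU by (intro prod.cong) auto
    also have "\<dots> = exp (\<Sum>i\<in>U \<inter> Ireac R. of_int (- R i) * ln (m i))"
      using finV mpos U by (intro prod_powr_exp) auto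
    finally show ?thesis by (simp add: g_def sum_negf)
  qed
  have p2: "(\<Prod>s\<in>U \<inter> Freac R. nU s powr of_int (R s)) = exp (sum g (U \<inter> Freac R))"
  proof -
    have "(\<Prod>s\<in>U \<inter> Freac R. nU s powr of_int (R s)) = (\<Prod>s\<in>U \<inter> Freac R. m s powr of_int (R s))"
      using nU by (intro prod.cong) auto
    also have "\<dots> = exp (\<Sum>i\<in>U \<inter> Freac R. of_int (R i) * ln (m i))"
      using finV mpos U by (intro prod_powr_exp) auto
    finally show ?thesis by (simp add: g_def)
  qed
  have p3: "(\<Prod>i\<in>Ireac R \<inter> V. m i powr of_int (- R i)) = exp (- sum g (V \<inter> Ireac R))"
  proof -
    have "(\<Prod>i\<in>Ireac R \<inter> V. m i powr of_int (- R i)) = exp (\<Sum>i\<in>Ireac R \<inter> V. of_int (- R i) * ln (m i))"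
      using finV mpos V by (intro prod_powr_exp) auto
    then show ?thesis by (simp add: g_def sum_negf Int_commute)
  qed
  have p4: "(\<Prod>i\<in>V. m i powr of_int (R i)) = exp (sum g V)"
    unfolding g_def using finV mpos V by (intro prod_powr_exp) auto
  have p5: "(\<Prod>i\<in>Ireac R. m i powr of_int (- R i)) = exp (- sum g (Om \<inter> Ireac R))"
  proof -
    have "(\<Prod>i\<in>Ireac R. m i powr of_int (- R i)) = exp (\<Sum>i\<in>Ireac R. of_int (- R i) * ln (m i))"
      using finI mpos IO by (intro prod_powr_exp) auto
    then show ?thesis using IO by (simp add: g_def sum_negf Int_absorb1)
  qed
  have p6: "(\<Prod>i\<in>Freac R. m i powr of_int (R i)) = exp (sum g (Om \<inter> Freac R))"
  proof -
    have "(\<Prod>i\<in>Freac R. m i powr of_int (R i)) = exp (\<Sum>i\<in>Freac R. of_int (R i) * ln (m i))"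
      using finI mpos FO by (intro prod_powr_exp) auto
    then show ?thesis using FO by (simp add: g_def Int_absorb1)
  qed
  have s1: "sum g Om = sum g (Om \<inter> Ireac R) + sum g (Om \<inter> Freac R)"
    using split_IF[OF fin g0] .
  have s2: "sum g V = sum g (V \<inter> Ireac R) + sum g (V \<inter> Freac R)"
    using split_IF[OF finV(1) g0] .
  have s3: "sum g U = sum g (U \<inter> Ireac R) + sum g (U \<inter> Freac R)"
    using split_IF[OF finV(2) g0] .
  have s4: "sum g Om = sum g U + sum g V"
  proof -
    have "Om = U \<union> V" using U V by auto
    then show ?thesis using finV V by (metis Diff_disjoint sum.union_disjoint Int_commute)
  qed
  have s5: "\<And>X. sum g (Om \<inter> X) = sum g (U \<inter> X) + sum g (V \<inter> X)"
  proof -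
    fix X
    have "Om \<inter> X = U \<inter> X \<union> V \<inter> X" using U V by auto
    then show "sum g (Om \<inter> X) = sum g (U \<inter> X) + sum g (V \<inter> X)"
      using finV V by (subst sum.union_disjoint[symmetric]) auto
  qed
  define P where "P = - sum g (Om \<inter> Ireac R)"
  define Q where "Q = sum g (Om \<inter> Freac R)"
  have SOm: "(\<Sum>j\<in>Om. of_int (R j) * ln (m j)) = Q - P"
    using s1 unfolding P_def Q_def g_def by simp
  have fl: "flux K R m = K R * exp P - K (neg R) * exp Q"
    unfolding flux_def p5 p6 P_def Q_def by simp
  have KR1': "KR1 = K R * exp (- sum g (U \<inter> Ireac R))" using KR1 p1 by simp
  have KR2': "KR2 = K (neg R) * exp (sum g (U \<inter> Freac R))" using KR2 p2 by simp
  have A: "KR1 * (\<Prod>i\<in>Ireac R \<inter> V. m i powr of_int (- R i)) = K R * exp P"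
  proof -
    have e: "exp (- x) * exp (- y) = exp (- (x + y))" for x y :: real
      by (metis exp_add minus_add_distrib)
    show ?thesis unfolding KR1' p3 P_def s5[of "Ireac R"] by (simp only: mult.assoc e)
  qed
  have B: "KR2 / KR1 * (\<Prod>i\<in>V. m i powr of_int (R i)) = K (neg R) / K R * exp (Q - P)"
  proof -
    have "KR2 / KR1 * (\<Prod>i\<in>V. m i powr of_int (R i))
       = K (neg R) / K R * (exp (sum g (U \<inter> Freac R)) / exp (- sum g (U \<inter> Ireac R)) * exp (sum g V))"
      unfolding KR1' KR2' p4 by simp
    also have "exp (sum g (U \<inter> Freac R)) / exp (- sum g (U \<inter> Ireac R)) * exp (sum g V) = exp (Q - P)"
      unfolding P_def Q_def using s1 s2 s3 s4 s5[of "Ireac R"] s5[of "Freac R"]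
      by (simp add: exp_diff[symmetric] exp_add[symmetric])
    finally show ?thesis .
  qed
  have C: "ln (K (neg R) / K R * exp (Q - P)) = ln (K (neg R) / K R) + (Q - P)"
  proof -
    have "K (neg R) / K R > 0" using K1 K2 by simp
    then show ?thesis using ln_mult[of "K (neg R) / K R" "exp (Q - P)"] K1 K2 by simp
  qed
  show ?thesis
    unfolding A B C SOm fl using K1
    by (simp add: field_simps exp_diff)
qed


lemma neg_neg_proj: "neg (proj V R) = proj V (neg R)"
  by (auto simp: neg_def proj_def)

lemma Ireac_neg: "Ireac (neg R) = Freac R"
  by (auto simp: Ireac_def Freac_def neg_def)

theorem proposition7p4:
  fixes N :: nat and RR :: "reaction set" and K :: "reaction \<Rightarrow> real"
    and E :: "nat \<Rightarrow> real" and U V :: "nat set" and nU :: conc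
    and n :: "real \<Rightarrow> conc"
  assumes kin: "kinetic_system N RR K"
    and bidir: "bidirectional RR"
    and db: "detailed_balance N RR K"
    and energy: "is_energy N RR K E"
    and U_sub: "U \<subseteq> Omega N" and U_ne: "U \<noteq> {}"
    and V_def: "V = Omega N - U"
    and nU_pos: "\<forall>j\<in>U. nU j > 0"
    and no_zero: "\<forall>R\<in>RR. proj V R \<noteq> (\<lambda>_. 0)"
    and all_one_one: "\<forall>R\<in>reduced_reactions V RR. one_one V RR R"
    and pos: "\<forall>t\<ge>0. \<forall>j\<in>Omega N. n t j > 0"
    and ode: "\<forall>t\<ge>0. \<forall>j\<in>Omega N.
        ((\<lambda>s. n s j) has_real_derivative
           ((\<Sum>R\<in>Rs RR. of_int (R j) * flux K R (n t)) + ext_flux RR K U (n t) j))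
          (at t within {0..})"
    and init: "\<forall>j\<in>U. n 0 j = nU j"
  shows "\<forall>t\<ge>0. ((\<lambda>s. free_energy N E (n s)) has_real_derivative
            (- dissipation U V RR K nU (n t) + ext_term RR K U E (n t)))
          (at t within {0..})"
proof (intro allI impI)
  fix t :: real assume t: "t \<ge> 0"
  define Om where "Om = Omega N"
  define m where "m = n t"
  have fin: "finite Om" by (simp add: Om_def Omega_def)
  have finRR: "finite RR" and RRout: "\<forall>R\<in>RR. \<forall>i. i \<notin> Om \<longrightarrow> R i = 0"
    and Kpos: "\<forall>R\<in>RR. K R > 0"
    using kin by (auto simp: kinetic_system_def chemical_network_def Om_def)
  have finRs: "finite (Rs RR)" using finRR by (simp add: Rs_def)
  have mpos: "\<forall>i\<in>Om. m i > 0" using pos t by (simp add: m_def Om_def)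
  define d where "d j = (\<Sum>R\<in>Rs RR. of_int (R j) * flux K R m) + ext_flux RR K U m j" for j
  have dU: "\<forall>j\<in>U. d j = 0" by (simp add: d_def ext_flux_def)
  have const: "\<forall>j\<in>U. m j = nU j"
  proof
    fix j assume j: "j \<in> U"
    have "\<exists>c. \<forall>x\<in>{0::real..}. n x j = c"
    proof (rule has_field_derivative_zero_constant)
      fix x :: real assume x: "x \<in> {0..}"
      have "((\<lambda>s. n s j) has_real_derivative
           ((\<Sum>R\<in>Rs RR. of_int (R j) * flux K R (n x)) + ext_flux RR K U (n x) j))
          (at x within {0..})" using ode x j U_sub by auto
      moreover have "(\<Sum>R\<in>Rs RR. of_int (R j) * flux K R (n x)) + ext_flux RR K U (n x) j = 0"
        using j by (simp add: ext_flux_def)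
      ultimately show "((\<lambda>s. n s j) has_real_derivative 0) (at x within {0..})" by simp
    qed simp
    then obtain c where "\<forall>x\<in>{0::real..}. n x j = c" by blast
    then have "n t j = n 0 j" using t by auto
    then show "m j = nU j" using init j by (simp add: m_def)
  qed
  have rr: "reduced_rate U V RR K nU (proj V Rb) =
      K Rb * (\<Prod>s\<in>U \<inter> Ireac Rb. nU s powr of_int (- Rb s))" if Rb: "Rb \<in> RR" for Rb
  proof -
    have "proj V Rb \<in> reduced_reactions V RR"
      using Rb no_zero unfolding reduced_reactions_def by blast
    then have "one_one V RR (proj V Rb)" using all_one_one by blast
    then have "{Rb' \<in> RR. proj V Rb' = proj V Rb} = {Rb}"
      using Rb unfolding one_one_def by blast
    then show ?thesis by (simp add: reduced_rate_def)
  qed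
  have termR: "(let KR = reduced_rate U V RR K nU;
            r = KR (neg (proj V R)) / KR (proj V R)
        in KR (proj V R) * (\<Prod>i\<in>Ireac R \<inter> V. m i powr (of_int (- R i)))
           * (r * (\<Prod>i\<in>V. m i powr (of_int (R i))) - 1)
           * ln (r * (\<Prod>j\<in>V. m j powr (of_int (R j)))))
     = - flux K R m * (ln (K (neg R) / K R) + (\<Sum>j\<in>Om. of_int (R j) * ln (m j)))"
    if R: "R \<in> Rs RR" for R
  proof -
    have R1: "R \<in> RR" using R by (simp add: Rs_def)
    have R2: "neg R \<in> RR" using R1 bidir by (simp add: bidirectional_def)
    have e1: "reduced_rate U V RR K nU (proj V R) = K R * (\<Prod>s\<in>U \<inter> Ireac R. nU s powr of_int (- R s))"
      using rr[OF R1] .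
    have e2: "reduced_rate U V RR K nU (neg (proj V R)) = K (neg R) * (\<Prod>s\<in>U \<inter> Freac R. nU s powr of_int (R s))"
      unfolding neg_neg_proj rr[OF R2] Ireac_neg by (simp add: neg_def)
    show ?thesis unfolding Let_def
      apply (rule per_R[OF fin _ _ _ mpos _ _ _ e1 e2])
      using U_sub V_def RRout R1 R2 Kpos const by (auto simp: Om_def)
  qed
  have D: "- dissipation U V RR K nU m = (\<Sum>R\<in>Rs RR. flux K R m * (ln (K (neg R) / K R) + (\<Sum>j\<in>Om. of_int (R j) * ln (m j))))"
    unfolding dissipation_def using termR by (simp add: sum_negf[symmetric])
  have L: "ln (m j * exp (E j)) = ln (m j) + E j" if "j \<in> Om" for j
  proof -
    have "m j > 0" using mpos that by auto
    then show ?thesis using ln_mult[of "m j" "exp (E j)"] by simp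
  qed
  have S: "(\<Sum>j\<in>Om. (\<Sum>R\<in>Rs RR. of_int (R j) * flux K R m) * ln (m j * exp (E j)))
      = (\<Sum>R\<in>Rs RR. flux K R m * (ln (K (neg R) / K R) + (\<Sum>j\<in>Om. of_int (R j) * ln (m j))))"
  proof -
    have "(\<Sum>j\<in>Om. (\<Sum>R\<in>Rs RR. of_int (R j) * flux K R m) * ln (m j * exp (E j)))
        = (\<Sum>j\<in>Om. (\<Sum>R\<in>Rs RR. of_int (R j) * flux K R m) * (ln (m j) + E j))"
      using L by (intro sum.cong) auto
    also have "\<dots> = (\<Sum>R\<in>Rs RR. flux K R m * ((\<Sum>j\<in>Om. of_int (R j) * E j) + (\<Sum>j\<in>Om. of_int (R j) * ln (m j))))"
      by (simp add: sum_distrib_right sum_distrib_left sum.distrib[symmetric] algebra_simps sum.swap[of _ Om])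
    also have "\<dots> = (\<Sum>R\<in>Rs RR. flux K R m * (ln (K (neg R) / K R) + (\<Sum>j\<in>Om. of_int (R j) * ln (m j))))"
      using energy by (intro sum.cong) (auto simp: is_energy_def Om_def)
    finally show ?thesis .
  qed
  have X: "(\<Sum>j\<in>Om. ext_flux RR K U m j * ln (m j * exp (E j))) = ext_term RR K U E m"
    unfolding ext_term_def
    by (rule sum.mono_neutral_right) (use fin U_sub in \<open>auto simp: ext_flux_def Om_def\<close>)
  have val: "(\<Sum>j\<in>Om. d j * ln (m j * exp (E j))) = - dissipation U V RR K nU m + ext_term RR K U E m"
    unfolding D d_def distrib_right sum.distrib S X ..
  have der: "((\<lambda>s. n s j * (ln (n s j * exp (E j)) - 1)) has_real_derivative d j * ln (m j * exp (E j)))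
        (at t within {0..})" if j: "j \<in> Om" for j
  proof -
    have h: "((\<lambda>s. n s j) has_real_derivative d j) (at t within {0..})"
      using ode t j by (simp add: d_def m_def Om_def)
    have mp: "m j > 0" using mpos j by auto
    show ?thesis
      by (rule derivative_eq_intros h | simp add: m_def[symmetric] mp)+
         (use mp in \<open>simp add: field_simps\<close>)
  qed
  have "((\<lambda>s. free_energy N E (n s)) has_real_derivative (\<Sum>j\<in>Om. d j * ln (m j * exp (E j))))
          (at t within {0..})"
    unfolding free_energy_def Om_def[symmetric] by (rule DERIV_sum) (rule der)
  then show "((\<lambda>s. free_energy N E (n s)) has_real_derivative
            (- dissipation U V RR K nU (n t) + ext_term RR K U E (n t))) (at t within {0..})"
    using val by (simp add: m_def)
qed

end
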